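(* Let $\Omega\subset\{1,\dots,N\}$ have cardinality $n$, let $0<\epsilon<1$, $\delta>0$, $s\in\mathbb{N}$, and let $b\in\mathbb{R}^N$, $c\in\mathbb{R}^{2N-1}$ be random vectors with independent Bernoulli $\pm1$ entries. Let $\delta_s$ denote the restricted isometry constant of order $s$ of either $\frac1{\sqrt n}S^b_\Omega$ or $\frac1{\sqrt n}T^c_\Omega$. Assume $$ n\ge 16\,\delta^{-2}s^2\log^2(2N^2/\epsilon).$$ Then with probability at least $1-\epsilon$ it holds $\delta_s\le\delta$.
   Context: For $b=(b_0,\dots,b_{N-1})\in\mathbb{R}^N$ the circulant matrix $S^b\in\mathbb{R}^{N\times N}$ has entries $S^b_{i,j}=b_{(j-i)\bmod N}$, $i,j=1,\dots,N$. For $c=(c_{-N+1},\dots,c_{N-1})\in\mathbb{R}^{2N-1}$ the Toeplitz matrix $T^c\in\mathbb{R}^{N\times N}$ has entries $T^c_{i,j}=c_{j-i}$. $S^b_\Omega$ (resp. $T^c_\Omega$) is the submatrix consisting of the rows indexed by $\Omega$. A Bernoulli $\pm1$ variable takes values $\pm1$ with probability $1/2$ each. The restricted isometry constant $\delta_s$ of a matrix $A$ is the smallest $\delta\ge0$ such that $(1-\delta)\|x\|_2^2\le\|Ax\|_2^2\le(1+\delta)\|x\|_2^2$ for all $x$ with at most $s$ non-zero entries. *)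

theory Defs
  imports "HOL-Probability.Probability"
begin

text \<open>Matrices are functions on row/column indices; rows and columns use the
paper's indices 1..N.\<close>

definition circulant :: "nat \<Rightarrow> (nat \<Rightarrow> real) \<Rightarrow> nat \<Rightarrow> nat \<Rightarrow> real" where
  "circulant N b i j = b (nat ((int j - int i) mod int N))"

text \<open>Toeplitz matrix: T^c(i,j) = c(j - i), with c indexed by -N+1..N-1.\<close>
definition toeplitz :: "(int \<Rightarrow> real) \<Rightarrow> nat \<Rightarrow> nat \<Rightarrow> real" where
  "toeplitz c i j = c (int j - int i)"

text \<open>Restricted isometry constant of order s of the row-submatrix A_Omega
(rows in Omega, columns 1..N).\<close>
definition RIC :: "nat \<Rightarrow> nat set \<Rightarrow> (nat \<Rightarrow> nat \<Rightarrow> real) \<Rightarrow> nat \<Rightarrow> real" where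
  "RIC N \<Omega> A s = Inf {d. d \<ge> 0 \<and>
     (\<forall>x :: nat \<Rightarrow> real. card {j\<in>{1..N}. x j \<noteq> 0} \<le> s \<longrightarrow>
        (1 - d) * (\<Sum>j=1..N. (x j)\<^sup>2) \<le> (\<Sum>i\<in>\<Omega>. (\<Sum>j=1..N. A i j * x j)\<^sup>2) \<and>
        (\<Sum>i\<in>\<Omega>. (\<Sum>j=1..N. A i j * x j)\<^sup>2) \<le> (1 + d) * (\<Sum>j=1..N. (x j)\<^sup>2))}"

text \<open>Independent Bernoulli +-1 entries on an index set (default value 0 outside).\<close>
definition bernoulli_vec :: "'a set \<Rightarrow> ('a \<Rightarrow> real) pmf" where
  "bernoulli_vec I = Pi_pmf I 0 (\<lambda>_. pmf_of_set {-1, 1})"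

end

theory Submission
  imports Defs
begin

lemma inner_cosh:
  "(\<integral>\<^sup>+y. ennreal (exp (l * (a * y))) * C \<partial>measure_pmf (pmf_of_set {-1,1::real})) = ennreal (cosh (l * a)) * C"
proof -
  define A where "A = ennreal (exp (-(l * a)))"
  define B where "B = ennreal (exp (l * a))"
  have "(\<integral>\<^sup>+y. ennreal (exp (l * (a * y))) * C \<partial>measure_pmf (pmf_of_set {-1,1::real}))
      = (\<Sum>y\<in>{-1,1::real}. ennreal (exp (l * (a * y))) * C) / of_nat (card {-1,1::real})"
    by (rule nn_integral_pmf_of_set) auto
  also have "\<dots> = (A * C + B * C) / 2"
    by (simp add: A_def B_def)
  also have "\<dots> = (A + B) * C / 2"
    by (simp only: distrib_right)
  also have "\<dots> = (A + B) * (C / 2)"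
    by (rule ennreal_times_divide[symmetric])
  also have "\<dots> = (A + B) / 2 * C"
    by (rule ennreal_divide_times[symmetric])
  also have "(A + B) / 2 = ennreal (cosh (l * a))"
  proof -
    have "A + B = ennreal (exp (-(l * a)) + exp (l * a))"
      unfolding A_def B_def by (rule ennreal_plus[symmetric]) auto
    also have "\<dots> / 2 = ennreal ((exp (-(l * a)) + exp (l * a)) / 2)"
      by (rule ennreal_divide_numeral) auto
    also have "(exp (-(l * a)) + exp (l * a)) / 2 = cosh (l * a)"
      by (simp add: cosh_def add.commute)
    finally show ?thesis .
  qed
  finally show ?thesis .
qed

lemma cosh_le_exp_sq: "cosh (l::real) \<le> exp (l\<^sup>2 / 2)"
proof -
  have main: "cosh l \<le> exp (l\<^sup>2 / 2)" if "l > 0" for l :: real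
  proof -
    interpret interval_bounded_random_variable "measure_pmf (pmf_of_set {-1,1::real})" "\<lambda>x. x" "-1" "1"
      by unfold_locales (auto simp: AE_measure_pmf_iff)
    have e: "measure_pmf.expectation (pmf_of_set {-1,1::real}) (\<lambda>x. x) = 0"
      by (subst integral_pmf_of_set) auto
    have "(\<integral>\<^sup>+x. ennreal (exp (l * x)) \<partial>measure_pmf (pmf_of_set {-1,1::real})) \<le> ennreal (exp (l\<^sup>2 * (1 - -1)\<^sup>2 / 8))"
      by (rule Hoeffdings_lemma_nn_integral_0[OF that e])
    also have "(\<integral>\<^sup>+x. ennreal (exp (l * x)) \<partial>measure_pmf (pmf_of_set {-1,1::real})) = ennreal (cosh l)"
      using inner_cosh[of l 1 1] by simp
    finally show ?thesis by (simp add: power2_eq_square ennreal_le_iff)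
  qed
  show ?thesis
  proof (cases "l = 0")
    case True then show ?thesis by simp
  next
    case False
    show ?thesis
    proof (cases "l > 0")
      case True then show ?thesis using main by blast
    next
      case False
      then have "-l > 0" using \<open>l \<noteq> 0\<close> by simp
      from main[OF this] show ?thesis by simp
    qed
  qed
qed

lemma bern_support:
  assumes "finite I" "b \<in> set_pmf (bernoulli_vec I)"
  shows "(\<forall>x\<in>I. b x \<in> {-1,1}) \<and> (\<forall>x. x \<notin> I \<longrightarrow> b x = 0)"
  using set_Pi_pmf_subset'[of I 0 "\<lambda>_. pmf_of_set {-1,1::real}"] assms
  unfolding bernoulli_vec_def by (auto simp: PiE_dflt_def)

lemma bern_abs:
  assumes "finite I" "b \<in> set_pmf (bernoulli_vec I)"
  shows "\<bar>b x\<bar> \<le> 1"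
  using bern_support[OF assms] by (cases "x \<in> I") auto

lemma bern_decomp:
  assumes "finite I" "x \<in> I"
  shows "bernoulli_vec I = map_pmf (\<lambda>(f,y). f(x:=y)) (pair_pmf (bernoulli_vec (I - {x})) (pmf_of_set {-1,1}))"
proof -
  have "bernoulli_vec I = map_pmf (\<lambda>(y,f). f(x:=y)) (pair_pmf (pmf_of_set {-1,1}) (bernoulli_vec (I - {x})))"
    unfolding bernoulli_vec_def
    using Pi_pmf_insert[of "I - {x}" x 0 "\<lambda>_. pmf_of_set {-1,1::real}"] assms by (simp add: insert_absorb)
  also have "\<dots> = map_pmf (\<lambda>(f,y). f(x:=y)) (pair_pmf (bernoulli_vec (I - {x})) (pmf_of_set {-1,1}))"
    by (subst pair_commute_pmf) (simp add: map_pmf_comp case_prod_beta')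
  finally show ?thesis .
qed

lemma step:
  fixes F :: "('a \<Rightarrow> real) \<Rightarrow> ennreal"
  assumes I: "finite I" "x \<in> I" and ux: "u \<noteq> x" and F: "\<And>b y. F (b(x:=y)) = F b"
  shows "(\<integral>\<^sup>+b. ennreal (exp (l * (b u * b x))) * F b \<partial>bernoulli_vec I)
           \<le> ennreal (cosh l) * (\<integral>\<^sup>+b. F b \<partial>bernoulli_vec I)"
proof -
  let ?Q = "bernoulli_vec (I - {x})"
  have fin: "finite (I - {x})" using I by simp
  have "(\<integral>\<^sup>+b. ennreal (exp (l * (b u * b x))) * F b \<partial>bernoulli_vec I)
      = (\<integral>\<^sup>+f. \<integral>\<^sup>+y. ennreal (exp (l * (f u * y))) * F f \<partial>pmf_of_set {-1,1} \<partial>?Q)"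
    by (subst bern_decomp[OF I]) (simp add: nn_integral_pair_pmf' F ux)
  also have "\<dots> = (\<integral>\<^sup>+f. ennreal (cosh (l * f u)) * F f \<partial>?Q)"
    by (simp add: inner_cosh)
  also have "\<dots> \<le> (\<integral>\<^sup>+f. ennreal (cosh l) * F f \<partial>?Q)"
  proof (rule nn_integral_mono_AE)
    show "AE f in measure_pmf ?Q. ennreal (cosh (l * f u)) * F f \<le> ennreal (cosh l) * F f"
      unfolding AE_measure_pmf_iff
    proof
      fix f assume "f \<in> set_pmf ?Q"
      then have "\<bar>f u\<bar> \<le> 1" by (rule bern_abs[OF fin])
      then have "\<bar>l * f u\<bar> \<le> \<bar>l\<bar>" by (simp add: abs_mult mult_left_le)
      then have "cosh (l * f u) \<le> cosh l"
        by (metis abs_ge_zero cosh_real_abs cosh_real_nonneg_le_iff)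
      then show "ennreal (cosh (l * f u)) * F f \<le> ennreal (cosh l) * F f"
        by (intro mult_right_mono) auto
    qed
  qed
  also have "\<dots> = ennreal (cosh l) * (\<integral>\<^sup>+f. F f \<partial>?Q)"
    by (simp add: nn_integral_cmult)
  also have "(\<integral>\<^sup>+f. F f \<partial>?Q) = (\<integral>\<^sup>+b. F b \<partial>bernoulli_vec I)"
    by (simp add: bern_decomp[OF I] nn_integral_pair_pmf' F measure_pmf.emeasure_space_1)
  finally show ?thesis .
qed


lemma mgf:
  fixes E :: "'e::linorder set" and p q :: "'e \<Rightarrow> 'a"
  assumes I: "finite I" and E: "finite E" and qI: "q ` E \<subseteq> I"
    and ord: "\<forall>e\<in>E. \<forall>e'\<in>E. e' < e \<longrightarrow> p e' \<noteq> q e \<and> q e' \<noteq> q e"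
    and pq: "\<forall>e\<in>E. p e \<noteq> q e"
  shows "(\<integral>\<^sup>+b. ennreal (exp (l * (\<Sum>e\<in>E. b (p e) * b (q e)))) \<partial>bernoulli_vec I) \<le> ennreal (cosh l ^ card E)"
  using E qI ord pq
proof (induction E rule: finite_linorder_max_induct)
  case empty then show ?case by (simp add: measure_pmf.emeasure_space_1)
next
  case (insert e A)
  have eA: "e \<notin> A" using insert.hyps(2) by auto
  let ?F = "\<lambda>b. ennreal (exp (l * (\<Sum>e\<in>A. b (p e) * b (q e))))"
  have F: "?F (b(q e := y)) = ?F b" for b y
  proof -
    have "(\<Sum>e'\<in>A. (b(q e := y)) (p e') * (b(q e := y)) (q e')) = (\<Sum>e'\<in>A. b (p e') * b (q e'))"
      using insert.prems(2) insert.hyps(2) by (intro sum.cong) auto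
    then show ?thesis by simp
  qed
  have "(\<integral>\<^sup>+b. ennreal (exp (l * (\<Sum>e\<in>insert e A. b (p e) * b (q e)))) \<partial>bernoulli_vec I)
      = (\<integral>\<^sup>+b. ennreal (exp (l * (b (p e) * b (q e)))) * ?F b \<partial>bernoulli_vec I)"
    using insert.hyps(1) eA by (simp add: distrib_left exp_add ennreal_mult')
  also have "\<dots> \<le> ennreal (cosh l) * (\<integral>\<^sup>+b. ?F b \<partial>bernoulli_vec I)"
    by (rule step[OF I _ _ F]) (use insert.prems in auto)
  also have "\<dots> \<le> ennreal (cosh l) * ennreal (cosh l ^ card A)"
    by (intro mult_left_mono insert.IH) (use insert.prems in auto)
  also have "\<dots> = ennreal (cosh l ^ card (insert e A))"
    using insert.hyps(1) eA by (simp add: ennreal_mult'[symmetric])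
  finally show ?case .
qed

lemma chernoff_helper:
  fixes S :: "'b \<Rightarrow> real" and M :: "'b pmf"
  assumes l: "l > 0" and B: "B \<ge> 0" and mgf: "(\<integral>\<^sup>+b. ennreal (exp (l * S b)) \<partial>M) \<le> ennreal B"
  shows "measure_pmf.prob M {b. S b \<ge> t} \<le> exp (-l*t) * B"
proof -
  have "emeasure M {b \<in> space M. S b \<ge> t} \<le> ennreal (exp (-l*t)) * (\<integral>\<^sup>+b. ennreal (exp (l * S b)) * indicator (space M) b \<partial>M)"
    by (rule Chernoff_ineq_nn_integral_ge) (auto simp: l)
  also have "(\<integral>\<^sup>+b. ennreal (exp (l * S b)) * indicator (space M) b \<partial>M) = (\<integral>\<^sup>+b. ennreal (exp (l * S b)) \<partial>M)"
    by simp
  also have "ennreal (exp (-l*t)) * \<dots> \<le> ennreal (exp (-l*t)) * ennreal B"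
    by (intro mult_left_mono mgf) auto
  also have "\<dots> = ennreal (exp (-l*t) * B)" by (simp add: ennreal_mult')
  finally have "ennreal (measure_pmf.prob M {b. S b \<ge> t}) \<le> ennreal (exp (-l*t) * B)"
    by (simp add: measure_pmf.emeasure_eq_measure)
  then show ?thesis using B by (simp add: ennreal_le_iff)
qed

lemma tail:
  fixes E :: "'e::linorder set" and p q :: "'e \<Rightarrow> 'a"
  assumes I: "finite I" and E: "finite E" and qI: "q ` E \<subseteq> I"
    and ord: "\<forall>e\<in>E. \<forall>e'\<in>E. e' < e \<longrightarrow> p e' \<noteq> q e \<and> q e' \<noteq> q e"
    and pq: "\<forall>e\<in>E. p e \<noteq> q e"
    and n: "card E \<le> n" "n > 0" and t: "t > 0" and sg: "\<sigma> \<in> {-1, 1::real}"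
  shows "measure_pmf.prob (bernoulli_vec I) {b. \<sigma> * (\<Sum>e\<in>E. b (p e) * b (q e)) \<ge> t} \<le> exp (-(t^2/(2*n)))"
proof -
  define l where "l = t / n"
  have l: "l > 0" using t n by (simp add: l_def)
  have "(\<integral>\<^sup>+b. ennreal (exp (l * (\<sigma> * (\<Sum>e\<in>E. b (p e) * b (q e))))) \<partial>bernoulli_vec I) \<le> ennreal (cosh (l*\<sigma>) ^ card E)"
    using mgf[OF I E qI ord pq, of "l*\<sigma>"] by (simp add: mult.assoc)
  also have "cosh (l*\<sigma>) = cosh l" using sg by auto
  finally have mg: "(\<integral>\<^sup>+b. ennreal (exp (l * (\<sigma> * (\<Sum>e\<in>E. b (p e) * b (q e))))) \<partial>bernoulli_vec I) \<le> ennreal (cosh l ^ card E)" .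
  have "measure_pmf.prob (bernoulli_vec I) {b. \<sigma> * (\<Sum>e\<in>E. b (p e) * b (q e)) \<ge> t} \<le> exp (-l*t) * cosh l ^ card E"
    by (rule chernoff_helper[where S="\<lambda>b. \<sigma> * (\<Sum>e\<in>E. b (p e) * b (q e))", OF l _ mg]) simp
  also have "\<dots> \<le> exp (-l*t) * exp (l^2/2) ^ n"
  proof -
    have "cosh l ^ card E \<le> exp (l^2/2) ^ card E"
      by (intro power_mono cosh_le_exp_sq) auto
    also have "\<dots> \<le> exp (l^2/2) ^ n"
      by (intro power_increasing n) auto
    finally show ?thesis by simp
  qed
  also have "\<dots> = exp (-l*t) * exp (n * (l^2/2))" by (simp only: exp_of_nat_mult)
  also have "\<dots> = exp (-l*t + n * (l^2/2))" by (simp only: exp_add)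
  also have "-l*t + n * (l^2/2) = -(t^2/(2*n))" using n by (simp add: l_def field_simps power2_eq_square)
  finally show ?thesis .
qed



lemma double_sum_sq: "finite S \<Longrightarrow> (\<Sum>j\<in>S. \<Sum>k\<in>S. \<delta> * ((x j)\<^sup>2 + (x k)\<^sup>2) / 2) = \<delta> * (card S * (\<Sum>j\<in>S. (x j::real)\<^sup>2))"
proof -
  assume finS: "finite S"
  have e1: "(\<Sum>k\<in>S. \<delta> * ((x j)\<^sup>2 + (x k)\<^sup>2) / 2) = card S * (\<delta>/2 * (x j)\<^sup>2) + \<delta>/2 * (\<Sum>k\<in>S. (x k)\<^sup>2)" for j
  proof -
    have "(\<Sum>k\<in>S. \<delta> * ((x j)\<^sup>2 + (x k)\<^sup>2) / 2) = (\<Sum>k\<in>S. \<delta>/2 * (x j)\<^sup>2 + \<delta>/2 * (x k)\<^sup>2)"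
      by (intro sum.cong) (auto simp: field_simps)
    also have "\<dots> = (\<Sum>k\<in>S. \<delta>/2 * (x j)\<^sup>2) + (\<Sum>k\<in>S. \<delta>/2 * (x k)\<^sup>2)" by (rule sum.distrib)
    also have "\<dots> = card S * (\<delta>/2 * (x j)\<^sup>2) + \<delta>/2 * (\<Sum>k\<in>S. (x k)\<^sup>2)" by (simp add: sum_distrib_left)
    finally show ?thesis .
  qed
  have "(\<Sum>j\<in>S. \<Sum>k\<in>S. \<delta> * ((x j)\<^sup>2 + (x k)\<^sup>2) / 2) = (\<Sum>j\<in>S. card S * (\<delta>/2 * (x j)\<^sup>2) + \<delta>/2 * (\<Sum>k\<in>S. (x k)\<^sup>2))"
    by (simp only: e1)
  also have "\<dots> = (\<Sum>j\<in>S. card S * (\<delta>/2 * (x j)\<^sup>2)) + card S * (\<delta>/2 * (\<Sum>k\<in>S. (x k)\<^sup>2))"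
    by (simp add: sum.distrib)
  also have "(\<Sum>j\<in>S. card S * (\<delta>/2 * (x j)\<^sup>2)) = card S * (\<delta>/2 * (\<Sum>j\<in>S. (x j)\<^sup>2))"
    by (simp add: sum_distrib_left)
  finally show ?thesis by (simp add: field_simps)
qed


lemma ric_le:
  fixes A :: "nat \<Rightarrow> nat \<Rightarrow> real"
  assumes \<delta>: "\<delta> \<ge> 0" and s: "s > 0"
    and diag: "\<And>j. j \<in> {1..N} \<Longrightarrow> (\<Sum>i\<in>\<Omega>. A i j * A i j) = 1"
    and off: "\<And>j k. j \<in> {1..N} \<Longrightarrow> k \<in> {1..N} \<Longrightarrow> j \<noteq> k \<Longrightarrow> \<bar>\<Sum>i\<in>\<Omega>. A i j * A i k\<bar> * s \<le> \<delta>"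
  shows "RIC N \<Omega> A s \<le> \<delta>"
  unfolding RIC_def
proof (rule cInf_lower)
  show "bdd_below {d. d \<ge> 0 \<and>
     (\<forall>x :: nat \<Rightarrow> real. card {j\<in>{1..N}. x j \<noteq> 0} \<le> s \<longrightarrow>
        (1 - d) * (\<Sum>j=1..N. (x j)\<^sup>2) \<le> (\<Sum>i\<in>\<Omega>. (\<Sum>j=1..N. A i j * x j)\<^sup>2) \<and>
        (\<Sum>i\<in>\<Omega>. (\<Sum>j=1..N. A i j * x j)\<^sup>2) \<le> (1 + d) * (\<Sum>j=1..N. (x j)\<^sup>2))}"
    by (rule bdd_belowI[of _ 0]) auto
  have main: "\<bar>(\<Sum>i\<in>\<Omega>. (\<Sum>j=1..N. A i j * x j)\<^sup>2) - (\<Sum>j=1..N. (x j)\<^sup>2)\<bar> \<le> \<delta> * (\<Sum>j=1..N. (x j)\<^sup>2)"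
    if cs: "card {j\<in>{1..N}. x j \<noteq> 0} \<le> s" for x
  proof -
    define S where "S = {j\<in>{1..N}. x j \<noteq> 0}"
    have finS: "finite S" and SN: "S \<subseteq> {1..N}" by (auto simp: S_def)
    define G where "G j k = (\<Sum>i\<in>\<Omega>. A i j * A i k)" for j k
    have r1: "(\<Sum>j=1..N. A i j * x j) = (\<Sum>j\<in>S. A i j * x j)" for i
      by (rule sum.mono_neutral_right) (auto simp: S_def)
    have X: "(\<Sum>j=1..N. (x j)\<^sup>2) = (\<Sum>j\<in>S. (x j)\<^sup>2)"
      by (rule sum.mono_neutral_right) (auto simp: S_def)
    have Q: "(\<Sum>i\<in>\<Omega>. (\<Sum>j=1..N. A i j * x j)\<^sup>2) = (\<Sum>j\<in>S. \<Sum>k\<in>S. x j * x k * G j k)"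
    proof -
      have sq: "(\<Sum>j\<in>S. A i j * x j)\<^sup>2 = (\<Sum>j\<in>S. \<Sum>k\<in>S. x j * x k * (A i j * A i k))" for i
        by (simp add: power2_eq_square sum_product algebra_simps)
      have "(\<Sum>i\<in>\<Omega>. (\<Sum>j=1..N. A i j * x j)\<^sup>2) = (\<Sum>i\<in>\<Omega>. \<Sum>j\<in>S. \<Sum>k\<in>S. x j * x k * (A i j * A i k))"
        by (simp only: r1 sq)
      also have "\<dots> = (\<Sum>j\<in>S. \<Sum>k\<in>S. \<Sum>i\<in>\<Omega>. x j * x k * (A i j * A i k))"
        by (rule trans[OF sum.swap], rule sum.cong[OF refl], rule sum.swap)
      also have "\<dots> = (\<Sum>j\<in>S. \<Sum>k\<in>S. x j * x k * G j k)"
        by (simp add: G_def sum_distrib_left)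
      finally show ?thesis .
    qed
    have spl: "(\<Sum>j\<in>S. \<Sum>k\<in>S. x j * x k * G j k) = (\<Sum>j\<in>S. (x j)\<^sup>2) + (\<Sum>j\<in>S. \<Sum>k\<in>S-{j}. x j * x k * G j k)"
    proof -
      have "(\<Sum>j\<in>S. \<Sum>k\<in>S. x j * x k * G j k) = (\<Sum>j\<in>S. (x j)\<^sup>2 + (\<Sum>k\<in>S-{j}. x j * x k * G j k))"
      proof (rule sum.cong[OF refl])
        fix j assume j: "j \<in> S"
        have "G j j = 1" using diag[of j] j SN by (auto simp: G_def)
        then show "(\<Sum>k\<in>S. x j * x k * G j k) = (x j)\<^sup>2 + (\<Sum>k\<in>S-{j}. x j * x k * G j k)"
          using j finS by (simp add: sum.remove power2_eq_square)
      qed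
      then show ?thesis by (simp add: sum.distrib)
    qed
    have cross: "\<bar>\<Sum>j\<in>S. \<Sum>k\<in>S-{j}. x j * x k * G j k\<bar> * s \<le> \<delta> * (card S * (\<Sum>j\<in>S. (x j)\<^sup>2))"
    proof -
      have "\<bar>\<Sum>j\<in>S. \<Sum>k\<in>S-{j}. x j * x k * G j k\<bar> * s \<le> (\<Sum>j\<in>S. \<Sum>k\<in>S-{j}. \<bar>x j * x k * G j k\<bar> * s)"
      proof -
        have "\<bar>\<Sum>j\<in>S. \<Sum>k\<in>S-{j}. x j * x k * G j k\<bar> \<le> (\<Sum>j\<in>S. \<Sum>k\<in>S-{j}. \<bar>x j * x k * G j k\<bar>)"
          by (rule order_trans[OF sum_abs], intro sum_mono sum_abs)
        then have "\<bar>\<Sum>j\<in>S. \<Sum>k\<in>S-{j}. x j * x k * G j k\<bar> * s \<le> (\<Sum>j\<in>S. \<Sum>k\<in>S-{j}. \<bar>x j * x k * G j k\<bar>) * s"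
          by (rule mult_right_mono) simp
        then show ?thesis by (simp add: sum_distrib_right)
      qed
      also have "\<dots> \<le> (\<Sum>j\<in>S. \<Sum>k\<in>S-{j}. \<delta> * ((x j)\<^sup>2 + (x k)\<^sup>2) / 2)"
      proof (intro sum_mono)
        fix j k assume j: "j \<in> S" and k: "k \<in> S - {j}"
        have jN: "j \<in> {1..N}" using j SN by blast
        have kN: "k \<in> {1..N}" using k SN by blast
        have jk: "j \<noteq> k" using k by blast
        have g: "\<bar>G j k\<bar> * s \<le> \<delta>" unfolding G_def by (rule off[OF jN kN jk])
        have xx: "\<bar>x j\<bar> * \<bar>x k\<bar> \<le> ((x j)\<^sup>2 + (x k)\<^sup>2) / 2"
          using sum_squares_bound[of "\<bar>x j\<bar>" "\<bar>x k\<bar>"] by (simp add: power2_eq_square)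
        have "\<bar>x j * x k * G j k\<bar> * s = (\<bar>x j\<bar> * \<bar>x k\<bar>) * (\<bar>G j k\<bar> * s)" by (simp add: abs_mult)
        also have "\<dots> \<le> (((x j)\<^sup>2 + (x k)\<^sup>2) / 2) * \<delta>"
          by (intro mult_mono xx g) auto
        finally show "\<bar>x j * x k * G j k\<bar> * s \<le> \<delta> * ((x j)\<^sup>2 + (x k)\<^sup>2) / 2" by (simp add: mult.commute)
      qed
      also have "\<dots> \<le> (\<Sum>j\<in>S. \<Sum>k\<in>S. \<delta> * ((x j)\<^sup>2 + (x k)\<^sup>2) / 2)"
        by (intro sum_mono sum_mono2) (use finS \<delta> in auto)
      also have "\<dots> = \<delta> * (card S * (\<Sum>j\<in>S. (x j)\<^sup>2))"
        by (rule double_sum_sq[OF finS])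
      finally show ?thesis .
    qed
    have "card S * (\<Sum>j\<in>S. (x j)\<^sup>2) \<le> s * (\<Sum>j\<in>S. (x j)\<^sup>2)"
      using cs by (intro mult_right_mono) (auto simp: S_def sum_nonneg)
    with cross \<delta> have "\<bar>\<Sum>j\<in>S. \<Sum>k\<in>S-{j}. x j * x k * G j k\<bar> * s \<le> (\<delta> * (\<Sum>j\<in>S. (x j)\<^sup>2)) * s"
      by (smt (verit) mult.commute mult.left_commute mult_left_mono)
    then have "\<bar>\<Sum>j\<in>S. \<Sum>k\<in>S-{j}. x j * x k * G j k\<bar> \<le> \<delta> * (\<Sum>j\<in>S. (x j)\<^sup>2)"
      using s by simp
    then show ?thesis unfolding Q spl X by simp
  qed
  show "\<delta> \<in> {d. d \<ge> 0 \<and>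
     (\<forall>x :: nat \<Rightarrow> real. card {j\<in>{1..N}. x j \<noteq> 0} \<le> s \<longrightarrow>
        (1 - d) * (\<Sum>j=1..N. (x j)\<^sup>2) \<le> (\<Sum>i\<in>\<Omega>. (\<Sum>j=1..N. A i j * x j)\<^sup>2) \<and>
        (\<Sum>i\<in>\<Omega>. (\<Sum>j=1..N. A i j * x j)\<^sup>2) \<le> (1 + d) * (\<Sum>j=1..N. (x j)\<^sup>2))}"
    using main \<delta> by (auto simp: abs_le_iff algebra_simps)
qed


lemma ric_triv:
  assumes "s = 0 \<or> N = 0" and "\<delta> \<ge> 0"
  shows "RIC N \<Omega> A s \<le> \<delta>"
  unfolding RIC_def
proof (rule cInf_lower)
  show "bdd_below {d. d \<ge> 0 \<and>
     (\<forall>x :: nat \<Rightarrow> real. card {j\<in>{1..N}. x j \<noteq> 0} \<le> s \<longrightarrow>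
        (1 - d) * (\<Sum>j=1..N. (x j)\<^sup>2) \<le> (\<Sum>i\<in>\<Omega>. (\<Sum>j=1..N. A i j * x j)\<^sup>2) \<and>
        (\<Sum>i\<in>\<Omega>. (\<Sum>j=1..N. A i j * x j)\<^sup>2) \<le> (1 + d) * (\<Sum>j=1..N. (x j)\<^sup>2))}"
    by (rule bdd_belowI[of _ 0]) auto
  have "(\<Sum>j=1..N. (x j)\<^sup>2) = 0 \<and> (\<forall>i. (\<Sum>j=1..N. A i j * x j) = 0)"
    if "card {j\<in>{1..N}. x j \<noteq> 0} \<le> s" for x :: "nat \<Rightarrow> real"
  proof (cases "N = 0")
    case True then show ?thesis by simp
  next
    case False
    with assms have "s = 0" by simp
    with that have "{j\<in>{1..N}. x j \<noteq> 0} = {}" by simp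
    then have "\<forall>j\<in>{1..N}. x j = 0" by blast
    then show ?thesis by simp
  qed
  then show "\<delta> \<in> {d. d \<ge> 0 \<and>
     (\<forall>x :: nat \<Rightarrow> real. card {j\<in>{1..N}. x j \<noteq> 0} \<le> s \<longrightarrow>
        (1 - d) * (\<Sum>j=1..N. (x j)\<^sup>2) \<le> (\<Sum>i\<in>\<Omega>. (\<Sum>j=1..N. A i j * x j)\<^sup>2) \<and>
        (\<Sum>i\<in>\<Omega>. (\<Sum>j=1..N. A i j * x j)\<^sup>2) \<le> (1 + d) * (\<Sum>j=1..N. (x j)\<^sup>2))}"
    using assms(2) by auto
qed

lemma pair_bound:
  fixes T S1 S2 :: "'b \<Rightarrow> real" and M :: "'b pmf"
  assumes TS: "\<And>b. T b = S1 b + S2 b"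
    and h1: "\<And>\<sigma>. \<sigma> \<in> {-1,1} \<Longrightarrow> measure_pmf.prob M {b. \<sigma> * S1 b \<ge> t} \<le> \<beta>"
    and h2: "\<And>\<sigma>. \<sigma> \<in> {-1,1} \<Longrightarrow> measure_pmf.prob M {b. \<sigma> * S2 b \<ge> t} \<le> \<beta>"
  shows "measure_pmf.prob M {b. \<bar>T b\<bar> > 2 * t} \<le> 4 * \<beta>"
proof -
  let ?A1 = "{b. 1 * S1 b \<ge> t}" and ?A2 = "{b. (-1) * S1 b \<ge> t}"
  let ?A3 = "{b. 1 * S2 b \<ge> t}" and ?A4 = "{b. (-1) * S2 b \<ge> t}"
  have "{b. \<bar>T b\<bar> > 2 * t} \<subseteq> (?A1 \<union> ?A2) \<union> (?A3 \<union> ?A4)"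
    using TS by force
  then have "measure_pmf.prob M {b. \<bar>T b\<bar> > 2 * t} \<le> measure_pmf.prob M ((?A1 \<union> ?A2) \<union> (?A3 \<union> ?A4))"
    by (intro measure_pmf.finite_measure_mono) auto
  also have "\<dots> \<le> measure_pmf.prob M (?A1 \<union> ?A2) + measure_pmf.prob M (?A3 \<union> ?A4)"
    by (rule measure_subadditive) (auto simp: measure_pmf.emeasure_finite)
  also have "\<dots> \<le> (measure_pmf.prob M ?A1 + measure_pmf.prob M ?A2) + (measure_pmf.prob M ?A3 + measure_pmf.prob M ?A4)"
    by (intro add_mono measure_subadditive) (auto simp: measure_pmf.emeasure_finite)
  also have "\<dots> \<le> (\<beta> + \<beta>) + (\<beta> + \<beta>)"
    by (intro add_mono h1 h2) auto
  finally show ?thesis by simp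
qed

lemma circ_idx_lt: "N > 0 \<Longrightarrow> nat ((x::int) mod int N) < N"
  by (simp add: nat_less_iff)

lemma circ_inj: "N > 0 \<Longrightarrow> inj_on (\<lambda>i. nat ((int j - int i) mod int N)) {1..N}"
proof
  fix x y assume N: "N > 0" and x: "x \<in> {1..N}" and y: "y \<in> {1..N}"
    and e: "nat ((int j - int x) mod int N) = nat ((int j - int y) mod int N)"
  have "0 \<le> (int j - int x) mod int N" "0 \<le> (int j - int y) mod int N" using N by simp_all
  with e have "(int j - int x) mod int N = (int j - int y) mod int N" by simp
  then have "int N dvd ((int j - int x) - (int j - int y))" by (simp only: mod_eq_dvd_iff)
  then have "int N dvd (int y - int x)" by simp
  moreover have "\<bar>int y - int x\<bar> < int N" using x y by auto
  ultimately show "x = y"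
  proof (cases "x = y")
    case False
    assume dv: "int N dvd (int y - int x)" and lt: "\<bar>int y - int x\<bar> < int N"
    have "int y - int x \<noteq> 0" using False by simp
    from dvd_imp_le_int[OF this dv] lt have False by simp
    then show ?thesis ..
  qed
qed

lemma circ_pair:
  fixes N j k n :: nat and \<Omega> :: "nat set"
  assumes N: "N > 0" and \<Omega>: "\<Omega> \<subseteq> {1..N}" "card \<Omega> = n" and n: "n > 0"
    and jk: "j \<in> {1..N}" "k \<in> {1..N}" "j < k" and t: "t > 0"
  shows "measure_pmf.prob (bernoulli_vec {..<N})
     {b. \<bar>\<Sum>i\<in>\<Omega>. b (nat ((int j - int i) mod int N)) * b (nat ((int k - int i) mod int N))\<bar> > 2 * t}
       \<le> 4 * exp (-(t^2/(2*n)))"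
proof -
  define d where "d = k - j"
  define m where "m i = nat ((int j - int i) mod int N)" for i
  have d: "0 < d" "d < N" using jk by (auto simp: d_def)
  have finO: "finite \<Omega>" using \<Omega>(1) finite_subset by blast
  have mk: "nat ((int k - int i) mod int N) = (m i + d) mod N" for i
  proof -
    have e: "int k - int i = (int j - int i) + int d" using jk by (simp add: d_def)
    have "(int k - int i) mod int N = ((int j - int i) mod int N + int d) mod int N"
      by (simp only: e mod_add_left_eq)
    also have "\<dots> = int ((m i + d) mod N)"
      using N by (simp add: m_def zmod_int)
    finally show ?thesis by simp
  qed
  have mN: "m i < N" for i using N by (simp add: m_def circ_idx_lt)
  have inj: "inj_on m \<Omega>"
    unfolding m_def by (rule inj_on_subset[OF circ_inj[OF N] \<Omega>(1)])
  define E where "E = m ` \<Omega>"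
  have finE: "finite E" using finO by (simp add: E_def)
  have cardE: "card E \<le> n" using \<Omega>(2) card_image_le[OF finO, of m] by (simp add: E_def)
  have EN: "E \<subseteq> {..<N}" using mN by (auto simp: E_def)
  define EA where "EA = E \<inter> {e. e + d < N}"
  define EW where "EW = E - {e. e + d < N}"
  have T: "(\<Sum>i\<in>\<Omega>. b (nat ((int j - int i) mod int N)) * b (nat ((int k - int i) mod int N)))
     = (\<Sum>e\<in>EA. b e * b (e + d)) + (\<Sum>e\<in>EW. b (e + d - N) * b e)" for b :: "nat \<Rightarrow> real"
  proof -
    have "(\<Sum>i\<in>\<Omega>. b (nat ((int j - int i) mod int N)) * b (nat ((int k - int i) mod int N)))
        = (\<Sum>i\<in>\<Omega>. b (m i) * b ((m i + d) mod N))"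
      by (intro sum.cong refl) (simp only: mk, simp add: m_def)
    also have "\<dots> = (\<Sum>e\<in>E. b e * b ((e + d) mod N))"
      by (simp add: E_def sum.reindex[OF inj])
    also have "\<dots> = (\<Sum>e\<in>EA. b e * b ((e + d) mod N)) + (\<Sum>e\<in>EW. b e * b ((e + d) mod N))"
      unfolding EA_def EW_def by (rule sum.Int_Diff[OF finE])
    also have "(\<Sum>e\<in>EA. b e * b ((e + d) mod N)) = (\<Sum>e\<in>EA. b e * b (e + d))"
      by (intro sum.cong refl) (auto simp: EA_def)
    also have "(\<Sum>e\<in>EW. b e * b ((e + d) mod N)) = (\<Sum>e\<in>EW. b (e + d - N) * b e)"
    proof (intro sum.cong refl)
      fix e assume e: "e \<in> EW"
      then have "e < N" "\<not> e + d < N" using EN by (auto simp: EW_def)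
      then have "N \<le> e + d" "e + d - N < N" using d by linarith+
      then have "(e + d) mod N = e + d - N"
        by (simp add: le_mod_geq)
      then show "b e * b ((e + d) mod N) = b (e + d - N) * b e" by simp
    qed
    finally show ?thesis .
  qed
  have h1: "measure_pmf.prob (bernoulli_vec {..<N}) {b. \<sigma> * (\<Sum>e\<in>EA. b e * b (e + d)) \<ge> t} \<le> exp (-(t^2/(2*n)))"
    if "\<sigma> \<in> {-1,1}" for \<sigma>
    by (rule tail[where p="\<lambda>e. e" and q="\<lambda>e. e + d"])
       (use that t n d finE cardE EN in \<open>auto simp: EA_def intro: card_mono[THEN order_trans] finite_subset\<close>)
  have h2: "measure_pmf.prob (bernoulli_vec {..<N}) {b. \<sigma> * (\<Sum>e\<in>EW. b (e + d - N) * b e) \<ge> t} \<le> exp (-(t^2/(2*n)))"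
    if "\<sigma> \<in> {-1,1}" for \<sigma>
    by (rule tail[where p="\<lambda>e. e + d - N" and q="\<lambda>e. e"])
       (use that t n d finE cardE EN in \<open>auto simp: EW_def intro: card_mono[THEN order_trans] finite_subset\<close>)
  show ?thesis
    by (rule pair_bound[OF T h1 h2])
qed

lemma toep_pair:
  fixes N j k n :: nat and \<Omega> :: "nat set"
  assumes \<Omega>: "\<Omega> \<subseteq> {1..N}" "card \<Omega> = n" and n: "n > 0"
    and jk: "j \<in> {1..N}" "k \<in> {1..N}" "j < k" and t: "t > 0"
  shows "measure_pmf.prob (bernoulli_vec {-(int N - 1)..int N - 1})
     {c. \<bar>\<Sum>i\<in>\<Omega>. c (int j - int i) * c (int k - int i)\<bar> > 2 * t}
       \<le> 4 * exp (-(t^2/(2*n)))"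
proof -
  have finO: "finite \<Omega>" using \<Omega>(1) finite_subset by blast
  define E where "E = (\<lambda>i. - int i) ` \<Omega>"
  have inj: "inj_on (\<lambda>i. - int i) \<Omega>" by (auto simp: inj_on_def)
  have finE: "finite E" using finO by (simp add: E_def)
  have cardE: "card E \<le> n" using \<Omega>(2) card_image_le[OF finO, of "\<lambda>i. - int i"] by (simp add: E_def)
  have T: "(\<Sum>i\<in>\<Omega>. c (int j - int i) * c (int k - int i))
     = (\<Sum>e\<in>E. c (int j + e) * c (int k + e)) + (\<lambda>c. 0::real) c" for c :: "int \<Rightarrow> real"
    by (simp add: E_def sum.reindex[OF inj])
  have h1: "measure_pmf.prob (bernoulli_vec {-(int N - 1)..int N - 1}) {c. \<sigma> * (\<Sum>e\<in>E. c (int j + e) * c (int k + e)) \<ge> t} \<le> exp (-(t^2/(2*n)))"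
    if "\<sigma> \<in> {-1,1}" for \<sigma>
    by (rule tail[where p="\<lambda>e. int j + e" and q="\<lambda>e. int k + e"])
       (use that t n finE cardE jk \<Omega>(1) in \<open>auto simp: E_def\<close>)
  have h2: "measure_pmf.prob (bernoulli_vec {-(int N - 1)..int N - 1}) {c. \<sigma> * (\<lambda>c. 0::real) c \<ge> t} \<le> exp (-(t^2/(2*n)))"
    if "\<sigma> \<in> {-1,1}" for \<sigma>
    using t by simp
  show ?thesis
    by (rule pair_bound[OF T h1 h2])
qed

lemma final_prob:
  fixes M :: "'b pmf" and G :: "'b set" and B :: "nat \<times> nat \<Rightarrow> 'b set"
  assumes P: "P \<subseteq> {1..N} \<times> {1..N}"
    and good: "\<And>b. b \<in> set_pmf M \<Longrightarrow> (\<forall>jk\<in>P. b \<notin> B jk) \<Longrightarrow> b \<in> G"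
    and each: "\<And>jk. jk \<in> P \<Longrightarrow> measure_pmf.prob M (B jk) \<le> \<beta>"
    and num: "P \<noteq> {} \<Longrightarrow> real (N * N) * \<beta> \<le> \<epsilon>" and \<epsilon>: "\<epsilon> \<ge> 0"
  shows "measure_pmf.prob M G \<ge> 1 - \<epsilon>"
proof -
  have finP: "finite P" using P finite_subset by blast
  have "UNIV - G \<subseteq> (\<Union>(B ` P)) \<union> (UNIV - set_pmf M)"
    using good by blast
  then have "measure_pmf.prob M (UNIV - G) \<le> measure_pmf.prob M ((\<Union>(B ` P)) \<union> (UNIV - set_pmf M))"
    by (intro measure_pmf.finite_measure_mono) auto
  also have "\<dots> \<le> measure_pmf.prob M (\<Union>(B ` P)) + measure_pmf.prob M (UNIV - set_pmf M)"
    by (rule measure_subadditive) (auto simp: measure_pmf.emeasure_finite)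
  also have "measure_pmf.prob M (UNIV - set_pmf M) = 0"
    by (simp add: measure_pmf_zero_iff)
  also have "measure_pmf.prob M (\<Union>(B ` P)) \<le> (\<Sum>jk\<in>P. measure_pmf.prob M (B jk))"
    by (rule measure_pmf.finite_measure_subadditive_finite[OF finP]) auto
  also have "\<dots> \<le> \<epsilon>"
  proof (cases "P = {}")
    case True then show ?thesis using \<epsilon> by simp
  next
    case False
    have "(\<Sum>jk\<in>P. measure_pmf.prob M (B jk)) \<le> of_nat (card P) * \<beta>"
      using each by (rule sum_bounded_above)
    also have "card P \<le> N * N"
      using card_mono[OF _ P] by simp
    then have "of_nat (card P) * \<beta> \<le> real (N * N) * \<beta>"
    proof -
      obtain jk where jk: "jk \<in> P" using False by blast
      have "\<beta> \<ge> 0" using each[OF jk] measure_nonneg[of "measure_pmf M" "B jk"] by linarith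
      moreover have "real (card P) \<le> real (N * N)" using \<open>card P \<le> N * N\<close> by (simp only: of_nat_le_iff)
      ultimately show ?thesis by (intro mult_right_mono)
    qed
    also have "\<dots> \<le> \<epsilon>" using num False by simp
    finally show ?thesis .
  qed
  finally have "measure_pmf.prob M (UNIV - G) \<le> \<epsilon>" by simp
  moreover have "measure_pmf.prob M (UNIV - G) = 1 - measure_pmf.prob M G"
    using measure_pmf.prob_compl[of G M] by simp
  ultimately show ?thesis by simp
qed

lemma final_num:
  fixes N :: nat and \<epsilon> L :: real
  assumes N: "N \<ge> 2" and \<epsilon>: "0 < \<epsilon>" "\<epsilon> < 1" and L: "L = ln (2 * (real N)\<^sup>2 / \<epsilon>)"
  shows "real (N * N) * (4 * exp (-2 * L\<^sup>2)) \<le> \<epsilon>"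
proof -
  have pos: "2 * (real N)\<^sup>2 / \<epsilon> > 0" using N \<epsilon> by simp
  have eL: "exp L = 2 * (real N)\<^sup>2 / \<epsilon>" using pos L by simp
  have N2: "real N \<ge> 2" using N by simp
  have "(real N)\<^sup>2 \<ge> 2\<^sup>2" by (rule power_mono[OF N2]) simp
  then have "(real N)\<^sup>2 \<ge> 4" by simp
  then have "2 * (real N)\<^sup>2 / \<epsilon> \<ge> 8" using \<epsilon> by (simp add: field_simps)
  moreover have "exp 1 < (8::real)" using e_less_272 by simp
  ultimately have "exp 1 \<le> exp L" using eL by simp
  then have L1: "L \<ge> 1" by simp
  have "L * 1 \<le> L * L" by (rule mult_left_mono) (use L1 in auto)
  then have "L - 2 * L\<^sup>2 \<le> -1" using L1 unfolding power2_eq_square by linarith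
  then have "exp (L - 2 * L\<^sup>2) \<le> exp (-1)" by simp
  also have "exp (-1::real) \<le> 1/2"
  proof -
    have "2 \<le> exp (1::real)" using exp_ge_add_one_self[of 1] by simp
    then show ?thesis by (simp add: exp_minus field_simps)
  qed
  finally have ex: "exp (L - 2 * L\<^sup>2) \<le> 1/2" .
  have "real (N * N) * (4 * exp (-2 * L\<^sup>2)) = 2 * \<epsilon> * (exp L * exp (-2 * L\<^sup>2))"
    using eL \<epsilon> by (simp add: field_simps power2_eq_square)
  also have "exp L * exp (-2 * L\<^sup>2) = exp (L - 2 * L\<^sup>2)" by (simp add: exp_add[symmetric])
  also have "2 * \<epsilon> * exp (L - 2 * L\<^sup>2) \<le> 2 * \<epsilon> * (1/2)"
    using ex \<epsilon> by (intro mult_left_mono) auto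
  finally show ?thesis by simp
qed


lemma div_sqrt_sq: "n > 0 \<Longrightarrow> x / sqrt (real n) * (y / sqrt (real n)) = x * y / real n"
proof -
  assume n: "n > 0"
  have "sqrt (real n) * sqrt (real n) = real n" by simp
  then show ?thesis by (simp add: field_simps)
qed

lemma circ_good:
  assumes N: "N > 0" and \<Omega>: "\<Omega> \<subseteq> {1..N}" "card \<Omega> = n" and n: "n > 0" and s: "s > 0" and \<delta>: "\<delta> \<ge> 0"
    and b: "b \<in> set_pmf (bernoulli_vec {..<N})"
    and off: "\<And>j k. j \<in> {1..N} \<Longrightarrow> k \<in> {1..N} \<Longrightarrow> j < k \<Longrightarrow>
      \<bar>\<Sum>i\<in>\<Omega>. b (nat ((int j - int i) mod int N)) * b (nat ((int k - int i) mod int N))\<bar> * s \<le> \<delta> * n"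
  shows "RIC N \<Omega> (\<lambda>i j. circulant N b i j / sqrt (real n)) s \<le> \<delta>"
proof (rule ric_le[OF \<delta> s])
  have sq: "b (nat ((int j - int i) mod int N)) * b (nat ((int j - int i) mod int N)) = 1" for j i :: nat
  proof -
    have "nat ((int j - int i) mod int N) \<in> {..<N}" using circ_idx_lt[OF N] by simp
    then have "b (nat ((int j - int i) mod int N)) \<in> {-1,1}" using bern_support[OF _ b] by auto
    then show ?thesis by auto
  qed
  show "(\<Sum>i\<in>\<Omega>. circulant N b i j / sqrt (real n) * (circulant N b i j / sqrt (real n))) = 1" for j
    using \<Omega> n by (simp add: div_sqrt_sq[OF n] circulant_def sq)
  show "\<bar>\<Sum>i\<in>\<Omega>. circulant N b i j / sqrt (real n) * (circulant N b i k / sqrt (real n))\<bar> * s \<le> \<delta>"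
    if jk: "j \<in> {1..N}" "k \<in> {1..N}" "j \<noteq> k" for j k
  proof -
    have e: "\<bar>\<Sum>i\<in>\<Omega>. circulant N b i j / sqrt (real n) * (circulant N b i k / sqrt (real n))\<bar>
       = \<bar>\<Sum>i\<in>\<Omega>. b (nat ((int j - int i) mod int N)) * b (nat ((int k - int i) mod int N))\<bar> / n"
      using n by (simp add: div_sqrt_sq[OF n] circulant_def sum_divide_distrib[symmetric])
    moreover have h: "\<bar>\<Sum>i\<in>\<Omega>. b (nat ((int j - int i) mod int N)) * b (nat ((int k - int i) mod int N))\<bar> * s \<le> \<delta> * n"
    proof (cases "j < k")
      case True then show ?thesis using off jk by blast
    next
      case False
      then have "k < j" using jk by simp
      then show ?thesis using off[of k j] jk by (simp add: mult.commute)
    qed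
    ultimately have f1: "(\<bar>\<Sum>i\<in>\<Omega>. circulant N b i j / sqrt (real n) * (circulant N b i k / sqrt (real n))\<bar>) * s = (\<bar>\<Sum>i\<in>\<Omega>. b (nat ((int j - int i) mod int N)) * b (nat ((int k - int i) mod int N))\<bar> * s) / n" and f2: "\<bar>\<Sum>i\<in>\<Omega>. b (nat ((int j - int i) mod int N)) * b (nat ((int k - int i) mod int N))\<bar> * s \<le> \<delta> * n" by simp_all
    have "(\<bar>\<Sum>i\<in>\<Omega>. circulant N b i j / sqrt (real n) * (circulant N b i k / sqrt (real n))\<bar>) * s \<le> (\<delta> * n) / n" unfolding f1 by (rule divide_right_mono[OF f2]) simp
    then show ?thesis using n by simp
  qed
qed

lemma toep_good:
  assumes \<Omega>: "\<Omega> \<subseteq> {1..N}" "card \<Omega> = n" and n: "n > 0" and s: "s > 0" and \<delta>: "\<delta> \<ge> 0"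
    and c: "c \<in> set_pmf (bernoulli_vec {-(int N - 1)..int N - 1})"
    and off: "\<And>j k. j \<in> {1..N} \<Longrightarrow> k \<in> {1..N} \<Longrightarrow> j < k \<Longrightarrow>
      \<bar>\<Sum>i\<in>\<Omega>. c (int j - int i) * c (int k - int i)\<bar> * s \<le> \<delta> * n"
  shows "RIC N \<Omega> (\<lambda>i j. toeplitz c i j / sqrt (real n)) s \<le> \<delta>"
proof (rule ric_le[OF \<delta> s])
  have sq: "c (int j - int i) * c (int j - int i) = 1" if "j \<in> {1..N}" "i \<in> \<Omega>" for j i :: nat
  proof -
    have "int j - int i \<in> {-(int N - 1)..int N - 1}" using that \<Omega>(1) by auto
    then have "c (int j - int i) \<in> {-1,1}" using bern_support[OF _ c] by auto
    then show ?thesis by auto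
  qed
  show "(\<Sum>i\<in>\<Omega>. toeplitz c i j / sqrt (real n) * (toeplitz c i j / sqrt (real n))) = 1"
    if "j \<in> {1..N}" for j
  proof -
    have "(\<Sum>i\<in>\<Omega>. toeplitz c i j / sqrt (real n) * (toeplitz c i j / sqrt (real n))) = (\<Sum>i\<in>\<Omega>. 1 / real n)"
      by (intro sum.cong refl) (auto simp: div_sqrt_sq[OF n] toeplitz_def sq[OF that])
    then show ?thesis using \<Omega> n by simp
  qed
  show "\<bar>\<Sum>i\<in>\<Omega>. toeplitz c i j / sqrt (real n) * (toeplitz c i k / sqrt (real n))\<bar> * s \<le> \<delta>"
    if jk: "j \<in> {1..N}" "k \<in> {1..N}" "j \<noteq> k" for j k
  proof -
    have e: "\<bar>\<Sum>i\<in>\<Omega>. toeplitz c i j / sqrt (real n) * (toeplitz c i k / sqrt (real n))\<bar>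
       = \<bar>\<Sum>i\<in>\<Omega>. c (int j - int i) * c (int k - int i)\<bar> / n"
      using n by (simp add: div_sqrt_sq[OF n] toeplitz_def sum_divide_distrib[symmetric])
    moreover have h: "\<bar>\<Sum>i\<in>\<Omega>. c (int j - int i) * c (int k - int i)\<bar> * s \<le> \<delta> * n"
    proof (cases "j < k")
      case True then show ?thesis using off jk by blast
    next
      case False
      then have "k < j" using jk by simp
      then show ?thesis using off[of k j] jk by (simp add: mult.commute)
    qed
    ultimately have f1: "(\<bar>\<Sum>i\<in>\<Omega>. toeplitz c i j / sqrt (real n) * (toeplitz c i k / sqrt (real n))\<bar>) * s = (\<bar>\<Sum>i\<in>\<Omega>. c (int j - int i) * c (int k - int i)\<bar> * s) / n" and f2: "\<bar>\<Sum>i\<in>\<Omega>. c (int j - int i) * c (int k - int i)\<bar> * s \<le> \<delta> * n" by simp_all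
    have "(\<bar>\<Sum>i\<in>\<Omega>. toeplitz c i j / sqrt (real n) * (toeplitz c i k / sqrt (real n))\<bar>) * s \<le> (\<delta> * n) / n" unfolding f1 by (rule divide_right_mono[OF f2]) simp
    then show ?thesis using n by simp
  qed
qed

theorem corollary4:
  fixes N n s :: nat and \<Omega> :: "nat set" and \<epsilon> \<delta> :: real
  assumes "\<Omega> \<subseteq> {1..N}" and "card \<Omega> = n"
    and "0 < \<epsilon>" and "\<epsilon> < 1" and "\<delta> > 0"
    and "real n \<ge> 16 * \<delta> powr (-2) * (real s)\<^sup>2 * (ln (2 * (real N)\<^sup>2 / \<epsilon>))\<^sup>2"
  shows "measure_pmf.prob (bernoulli_vec {..<N})
            {b. RIC N \<Omega> (\<lambda>i j. circulant N b i j / sqrt (real n)) s \<le> \<delta>} \<ge> 1 - \<epsilon> \<and>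
         measure_pmf.prob (bernoulli_vec {-(int N - 1)..int N - 1})
            {c. RIC N \<Omega> (\<lambda>i j. toeplitz c i j / sqrt (real n)) s \<le> \<delta>} \<ge> 1 - \<epsilon>"
proof (cases "s = 0 \<or> N = 0")
  case True
  have r1: "RIC N \<Omega> (\<lambda>i j. circulant N b i j / sqrt (real n)) s \<le> \<delta>" for b
    by (rule ric_triv[OF True]) (use assms(5) in simp)
  have r2: "RIC N \<Omega> (\<lambda>i j. toeplitz c i j / sqrt (real n)) s \<le> \<delta>" for c
    by (rule ric_triv[OF True]) (use assms(5) in simp)
  show ?thesis using r1 r2 assms(3) by simp
next
  case False
  then have s: "s > 0" and N: "N > 0" by auto
  have \<Omega>: "\<Omega> \<subseteq> {1..N}" "card \<Omega> = n" using assms by auto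
  have \<epsilon>: "0 < \<epsilon>" "\<epsilon> < 1" and \<delta>: "\<delta> > 0" using assms by auto
  define L where "L = ln (2 * (real N)\<^sup>2 / \<epsilon>)"
  have "2 * (real N)\<^sup>2 / \<epsilon> > 1"
  proof -
    have "(real N)\<^sup>2 \<ge> 1" using N by simp
    then show ?thesis using \<epsilon> by (simp add: field_simps)
  qed
  then have Lpos: "L > 0" by (simp add: L_def)
  have pw: "\<delta> powr (-2) = 1 / \<delta>\<^sup>2" using \<delta> by (simp add: powr_minus powr_numeral divide_inverse)
  have hyp: "real n * \<delta>\<^sup>2 \<ge> 16 * (real s)\<^sup>2 * L\<^sup>2"
  proof -
    have "real n \<ge> 16 * (1 / \<delta>\<^sup>2) * (real s)\<^sup>2 * L\<^sup>2" using assms(6) pw by (simp add: L_def)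
    then have "real n * \<delta>\<^sup>2 \<ge> 16 * (1 / \<delta>\<^sup>2) * (real s)\<^sup>2 * L\<^sup>2 * \<delta>\<^sup>2"
      by (intro mult_right_mono) auto
    then show ?thesis using \<delta> by (simp add: field_simps)
  qed
  have "16 * (real s)\<^sup>2 * L\<^sup>2 > 0" using s Lpos by simp
  then have "real n * \<delta>\<^sup>2 > 0" using hyp by linarith
  then have n: "n > 0" using \<delta> by (simp add: zero_less_mult_iff)
  define t where "t = \<delta> * n / (2 * s)"
  have t: "t > 0" using \<delta> n s by (simp add: t_def)
  have key: "exp (-(t^2/(2*n))) \<le> exp (-2 * L\<^sup>2)"
  proof -
    have "t^2/(2*n) = (real n * \<delta>\<^sup>2) / (8 * (real s)\<^sup>2)"
      using n s by (simp add: t_def field_simps power2_eq_square)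
    also have "\<dots> \<ge> (16 * (real s)\<^sup>2 * L\<^sup>2) / (8 * (real s)\<^sup>2)"
      using hyp s by (intro divide_right_mono) auto
    also have "(16 * (real s)\<^sup>2 * L\<^sup>2) / (8 * (real s)\<^sup>2) = 2 * L\<^sup>2" using s by simp
    finally show ?thesis by simp
  qed
  define \<beta> where "\<beta> = 4 * exp (-(t^2/(2*n)))"
  define P where "P = {(j,k). j \<in> {1..N} \<and> k \<in> {1..N} \<and> j < k}"
  have PN: "P \<subseteq> {1..N} \<times> {1..N}" by (auto simp: P_def)
  have num: "real (N * N) * \<beta> \<le> \<epsilon>" if "P \<noteq> {}"
  proof -
    from that obtain jk where "jk \<in> P" by blast
    then obtain j k where "j \<in> {1..N}" "k \<in> {1..N}" "j < k" unfolding P_def by blast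
    then have N2: "N \<ge> 2" unfolding atLeastAtMost_iff by linarith
    have "real (N * N) * \<beta> \<le> real (N * N) * (4 * exp (-2 * L\<^sup>2))"
      unfolding \<beta>_def by (intro mult_left_mono key) auto
    also have "\<dots> \<le> \<epsilon>" by (rule final_num[OF N2 \<epsilon> L_def])
    finally show ?thesis .
  qed
  have tt: "2 * t = \<delta> * n / s" using s by (simp add: t_def)
  show ?thesis
  proof
    show "measure_pmf.prob (bernoulli_vec {..<N})
            {b. RIC N \<Omega> (\<lambda>i j. circulant N b i j / sqrt (real n)) s \<le> \<delta>} \<ge> 1 - \<epsilon>"
    proof (rule final_prob[OF PN _ _ num])
      fix b assume b: "b \<in> set_pmf (bernoulli_vec {..<N})"
        and nb: "\<forall>jk\<in>P. b \<notin> (\<lambda>(j,k). {b. \<bar>\<Sum>i\<in>\<Omega>. b (nat ((int j - int i) mod int N)) * b (nat ((int k - int i) mod int N))\<bar> > 2 * t}) jk"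
      show "b \<in> {b. RIC N \<Omega> (\<lambda>i j. circulant N b i j / sqrt (real n)) s \<le> \<delta>}"
      proof (simp, rule circ_good[OF N \<Omega> n s _ b])
        show "0 \<le> \<delta>" using \<delta> by simp
        fix j k assume jk: "j \<in> {1..N}" "k \<in> {1..N}" "j < k"
        then have "(j,k) \<in> P" by (simp add: P_def)
        with nb have "\<bar>\<Sum>i\<in>\<Omega>. b (nat ((int j - int i) mod int N)) * b (nat ((int k - int i) mod int N))\<bar> \<le> \<delta> * n / s"
          using tt by auto
        then show "\<bar>\<Sum>i\<in>\<Omega>. b (nat ((int j - int i) mod int N)) * b (nat ((int k - int i) mod int N))\<bar> * s \<le> \<delta> * n"
          using s by (simp add: field_simps)
      qed
    next
      fix jk assume "jk \<in> P"
      then obtain j k where jk: "jk = (j,k)" "j \<in> {1..N}" "k \<in> {1..N}" "j < k" by (auto simp: P_def)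
      show "measure_pmf.prob (bernoulli_vec {..<N}) ((\<lambda>(j,k). {b. \<bar>\<Sum>i\<in>\<Omega>. b (nat ((int j - int i) mod int N)) * b (nat ((int k - int i) mod int N))\<bar> > 2 * t}) jk) \<le> \<beta>"
        unfolding jk(1) \<beta>_def using circ_pair[OF N \<Omega> n jk(2-4) t] by simp
    next
      show "0 \<le> \<epsilon>" using \<epsilon> by simp
    qed
    show "measure_pmf.prob (bernoulli_vec {-(int N - 1)..int N - 1})
            {c. RIC N \<Omega> (\<lambda>i j. toeplitz c i j / sqrt (real n)) s \<le> \<delta>} \<ge> 1 - \<epsilon>"
    proof (rule final_prob[OF PN _ _ num])
      fix c assume c: "c \<in> set_pmf (bernoulli_vec {-(int N - 1)..int N - 1})"
        and nb: "\<forall>jk\<in>P. c \<notin> (\<lambda>(j,k). {c. \<bar>\<Sum>i\<in>\<Omega>. c (int j - int i) * c (int k - int i)\<bar> > 2 * t}) jk"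
      show "c \<in> {c. RIC N \<Omega> (\<lambda>i j. toeplitz c i j / sqrt (real n)) s \<le> \<delta>}"
      proof (simp, rule toep_good[OF \<Omega> n s _ c])
        show "0 \<le> \<delta>" using \<delta> by simp
        fix j k assume jk: "j \<in> {1..N}" "k \<in> {1..N}" "j < k"
        then have "(j,k) \<in> P" by (simp add: P_def)
        with nb have "\<bar>\<Sum>i\<in>\<Omega>. c (int j - int i) * c (int k - int i)\<bar> \<le> \<delta> * n / s"
          using tt by auto
        then show "\<bar>\<Sum>i\<in>\<Omega>. c (int j - int i) * c (int k - int i)\<bar> * s \<le> \<delta> * n"
          using s by (simp add: field_simps)
      qed
    next
      fix jk assume "jk \<in> P"
      then obtain j k where jk: "jk = (j,k)" "j \<in> {1..N}" "k \<in> {1..N}" "j < k" by (auto simp: P_def)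
      show "measure_pmf.prob (bernoulli_vec {-(int N - 1)..int N - 1}) ((\<lambda>(j,k). {c. \<bar>\<Sum>i\<in>\<Omega>. c (int j - int i) * c (int k - int i)\<bar> > 2 * t}) jk) \<le> \<beta>"
        unfolding jk(1) \<beta>_def using toep_pair[OF \<Omega> n jk(2-4) t] by simp
    next
      show "0 \<le> \<epsilon>" using \<epsilon> by simp
    qed
  qed
qed

end
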